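(* Suppose $\widehat Z^\natural$ satisfies the average case incoherence condition with parameter $\mu_0$. Then for any two pairs $(j,k),(\alpha,\beta)\in[d]\times[n]$, $$\sqrt{\frac{w_k}{w_\beta}}\,\big|\langle\mathcal P_{\widehat T}(\widehat G_{j,k}),\widehat G_{\alpha,\beta}\rangle\big|\le\frac{3\mu_0 r}{n}.$$
   Context: Let $d\ge1$, $n$ odd, $n_1=n_2=(n+1)/2$. For $a\in[n]$, $w_a=\#\{(j,k)\in[n_1]\times[n_2]:j+k=a+1\}$, $G_a=w_a^{-1/2}\sum_{j+k=a+1}e_je_k^{\mathsf T}$. $F$ is the $d\times d$ unitary DFT matrix, $F_{ij}=d^{-1/2}e^{-2\pi\mathrm i(i-1)(j-1)/d}$. $\widehat G_{j,k}=\mathrm{diag}(F_{1j}G_k,\dots,F_{dj}G_k)$. Inner product $\langle A,B\rangle=\mathrm{tr}(AB^{\mathsf H})$. $\widehat Z^\natural=\mathrm{diag}(\widehat Z^\natural_a)$ with each block of rank $r$ and compact SVD $\widehat U_a\widehat\Sigma_a\widehat V_a^{\mathsf H}$; $\mathcal P_{\widehat T}$ acts blockwise on block diagonal matrices by $W_a\mapsto\widehat U_a\widehat U_a^{\mathsf H}W_a+W_a\widehat V_a\widehat V_a^{\mathsf H}-\widehat U_a\widehat U_a^{\mathsf H}W_a\widehat V_a\widehat V_a^{\mathsf H}$. Average case incoherence with parameter $\mu_0$: $\max_i\frac1d\sum_a\|e_i^{\mathsf T}\widehat U_a\|_2^2\le\mu_0r/n$ and $\max_j\frac1d\sum_a\|e_j^{\mathsf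 T}\widehat V_a\|_2^2\le\mu_0r/n$. *)

theory Defs
  imports "HOL-Analysis.Analysis"
begin

text \<open>Matrices are functions nat => nat => complex, indexed from 1, with the
  dimensions given explicitly. Block-diagonal matrices diag(W_1,...,W_d) are
  represented by their family of blocks a => W_a.\<close>

type_synonym cmat = "nat \<Rightarrow> nat \<Rightarrow> complex"
type_synonym bdmat = "nat \<Rightarrow> cmat"

definition half :: "nat \<Rightarrow> nat" where
  "half n = (n + 1) div 2"

definition wt :: "nat \<Rightarrow> nat \<Rightarrow> nat" where
  "wt n a = card {(j, k). j \<in> {1..half n} \<and> k \<in> {1..half n} \<and> j + k = a + 1}"

definition Gmat :: "nat \<Rightarrow> nat \<Rightarrow> cmat" where
  "Gmat n a = (\<lambda>i l. if i \<in> {1..half n} \<and> l \<in> {1..half n} \<and> i + l = a + 1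
                      then complex_of_real (1 / sqrt (real (wt n a))) else 0)"

definition DFT :: "nat \<Rightarrow> nat \<Rightarrow> nat \<Rightarrow> complex" where
  "DFT d i j = exp (- 2 * complex_of_real pi * \<i> * of_nat ((i - 1) * (j - 1)) / of_nat d)
               / complex_of_real (sqrt (real d))"

definition Ghat :: "nat \<Rightarrow> nat \<Rightarrow> nat \<Rightarrow> nat \<Rightarrow> bdmat" where
  "Ghat d n j k = (\<lambda>a i l. DFT d a j * Gmat n k i l)"

definition mmul :: "nat \<Rightarrow> cmat \<Rightarrow> cmat \<Rightarrow> cmat" where
  "mmul m A B = (\<lambda>i l. \<Sum>t = 1..m. A i t * B t l)"

definition adj :: "cmat \<Rightarrow> cmat" where
  "adj A = (\<lambda>i l. cnj (A l i))"

definition PT :: "nat \<Rightarrow> nat \<Rightarrow> nat \<Rightarrow> bdmat \<Rightarrow> bdmat \<Rightarrow> bdmat \<Rightarrow> bdmat" where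
  "PT n1 n2 r U V W = (\<lambda>a.
     let PU = mmul r (U a) (adj (U a)); PV = mmul r (V a) (adj (V a)) in
     (\<lambda>i l. mmul n1 PU (W a) i l + mmul n2 (W a) PV i l
            - mmul n2 (mmul n1 PU (W a)) PV i l))"

definition inner_bd :: "nat \<Rightarrow> nat \<Rightarrow> nat \<Rightarrow> bdmat \<Rightarrow> bdmat \<Rightarrow> complex" where
  "inner_bd d n1 n2 A B = (\<Sum>a = 1..d. \<Sum>i = 1..n1. \<Sum>l = 1..n2. A a i l * cnj (B a i l))"

end

theory Submission imports Defs begin

definition rho :: "nat \<Rightarrow> cmat \<Rightarrow> nat \<Rightarrow> real" where
  "rho r X i = (\<Sum>t=1..r. (cmod (X i t))^2)"

definition Eind :: "nat \<Rightarrow> nat \<Rightarrow> nat \<Rightarrow> nat \<Rightarrow> real" where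
  "Eind h k i l = (if i \<in> {1..h} \<and> l \<in> {1..h} \<and> i + l = k + 1 then 1 else 0)"

lemma rho_nonneg: "rho r X i \<ge> 0"
  unfolding rho_def by (intro sum_nonneg) auto

lemma amgm: "(a::real) * b \<le> (a^2 + b^2)/2"
proof -
  have "0 \<le> (a - b)^2" by simp
  thus ?thesis by (simp add: power2_eq_square algebra_simps)
qed

lemma proj_entry: "mmul r X (adj X) i i' = (\<Sum>t=1..r. X i t * cnj (X i' t))"
  by (simp add: mmul_def adj_def)

lemma entry_bound: "cmod (mmul r X (adj X) i i') \<le> (rho r X i + rho r X i')/2"
proof -
  have "cmod (mmul r X (adj X) i i') \<le> (\<Sum>t=1..r. cmod (X i t) * cmod (X i' t))"
    unfolding proj_entry by (rule order_trans[OF norm_sum]) (simp add: norm_mult)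
  also have "\<dots> \<le> (\<Sum>t=1..r. ((cmod (X i t))^2 + (cmod (X i' t))^2)/2)"
    by (intro sum_mono amgm)
  also have "\<dots> = (rho r X i + rho r X i')/2"
    by (simp only: rho_def sum_divide_distrib[symmetric] sum.distrib)
  finally show ?thesis .
qed

lemma proj_sym: "cmod (mmul r X (adj X) i i') = cmod (mmul r X (adj X) i' i)"
proof -
  have "mmul r X (adj X) i' i = cnj (mmul r X (adj X) i i')"
    by (simp add: proj_entry mult.commute)
  thus ?thesis by simp
qed

lemma row_norm:
  assumes orth: "\<forall>s \<in> {1..r}. \<forall>t \<in> {1..r}.
        (\<Sum>i = 1..h. cnj (X i s) * X i t) = (if s = t then 1 else 0)"
  shows "(\<Sum>i'=1..h. (cmod (mmul r X (adj X) i i'))^2) = rho r X i"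
proof -
  have "complex_of_real (\<Sum>i'=1..h. (cmod (mmul r X (adj X) i i'))^2)
     = (\<Sum>i'=1..h. (\<Sum>t=1..r. X i t * cnj (X i' t)) * (\<Sum>s=1..r. cnj (X i s) * X i' s))"
    unfolding of_real_sum complex_norm_square proj_entry by (simp add: mult.commute)
  also have "\<dots> = (\<Sum>i'=1..h. \<Sum>t=1..r. \<Sum>s=1..r. (X i t * cnj (X i s)) * (cnj (X i' t) * X i' s))"
    by (simp add: sum_distrib_left sum_distrib_right mult_ac)
  also have "\<dots> = (\<Sum>t=1..r. \<Sum>s=1..r. (X i t * cnj (X i s)) * (\<Sum>i'=1..h. cnj (X i' t) * X i' s))"
  proof -
    have "(\<Sum>i'=1..h. \<Sum>t=1..r. \<Sum>s=1..r. (X i t * cnj (X i s)) * (cnj (X i' t) * X i' s))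
       = (\<Sum>t=1..r. \<Sum>i'=1..h. \<Sum>s=1..r. (X i t * cnj (X i s)) * (cnj (X i' t) * X i' s))"
      by (rule sum.swap)
    also have "\<dots> = (\<Sum>t=1..r. \<Sum>s=1..r. \<Sum>i'=1..h. (X i t * cnj (X i s)) * (cnj (X i' t) * X i' s))"
      by (rule sum.cong[OF refl], rule sum.swap)
    finally show ?thesis by (simp add: sum_distrib_left)
  qed
  also have "\<dots> = (\<Sum>t=1..r. \<Sum>s=1..r. (X i t * cnj (X i s)) * (if t = s then 1 else 0))"
    using orth by (intro sum.cong refl) auto
  also have "\<dots> = (\<Sum>t=1..r. X i t * cnj (X i t))"
    by (simp add: if_distrib cong: if_cong)
  also have "\<dots> = complex_of_real (rho r X i)"
    unfolding rho_def of_real_sum complex_norm_square ..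
  finally show ?thesis using of_real_eq_iff by blast
qed

lemma col_norm:
  assumes orth: "\<forall>s \<in> {1..r}. \<forall>t \<in> {1..r}.
        (\<Sum>i = 1..h. cnj (X i s) * X i t) = (if s = t then 1 else 0)"
  shows "(\<Sum>i'=1..h. (cmod (mmul r X (adj X) i' i))^2) = rho r X i"
  using row_norm[OF orth, of i] by (simp add: proj_sym)

lemma ind_sum1: "(\<Sum>i'=1..h. Eind h k i' l) \<le> 1"
proof -
  have "(\<Sum>i'=1..h. Eind h k i' l) \<le> (\<Sum>i'=1..h. if i' = k + 1 - l then 1 else 0)"
    by (intro sum_mono) (auto simp: Eind_def)
  also have "\<dots> \<le> 1" by (simp add: sum.delta)
  finally show ?thesis .
qed

lemma ind_sum2: "(\<Sum>l'=1..h. Eind h k i l') \<le> 1"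
proof -
  have "(\<Sum>l'=1..h. Eind h k i l') \<le> (\<Sum>l'=1..h. if l' = k + 1 - i then 1 else 0)"
    by (intro sum_mono) (auto simp: Eind_def)
  also have "\<dots> \<le> 1" by (simp add: sum.delta)
  finally show ?thesis .
qed

lemma ind_count: "(\<Sum>i=1..half n. \<Sum>l=1..half n. Eind (half n) b i l) = real (wt n b)"
proof -
  let ?A = "{1..half n}"
  have "(\<Sum>i=1..half n. \<Sum>l=1..half n. Eind (half n) b i l)
      = (\<Sum>(i,l)\<in>?A\<times>?A. Eind (half n) b i l)"
    by (simp add: sum.cartesian_product)
  also have "\<dots> = (\<Sum>p\<in>?A\<times>?A. of_bool (fst p + snd p = b + 1))"
    by (intro sum.cong refl) (auto simp: Eind_def)
  also have "\<dots> = real (card (?A\<times>?A \<inter> {p. fst p + snd p = b + 1}))"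
    by simp
  also have "?A\<times>?A \<inter> {p. fst p + snd p = b + 1} = {(j, k). j \<in> ?A \<and> k \<in> ?A \<and> j + k = b + 1}"
    by auto
  finally show ?thesis unfolding wt_def .
qed


lemma mmul_scale_right: "mmul m A (\<lambda>i l. c * B i l) = (\<lambda>i l. c * mmul m A B i l)"
  by (simp add: mmul_def sum_distrib_left mult_ac)

lemma mmul_scale_left: "mmul m (\<lambda>i l. c * A i l) B = (\<lambda>i l. c * mmul m A B i l)"
  by (simp add: mmul_def sum_distrib_left mult_ac)

lemma PT_scale: "PT n1 n2 r U V (\<lambda>a i l. f a * B a i l) = (\<lambda>a i l. f a * PT n1 n2 r U V B a i l)"
  by (simp add: PT_def Let_def mmul_scale_right mmul_scale_left algebra_simps)

lemma norm_DFT: "cmod (DFT d a j) = 1 / sqrt (real d)"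
  by (simp add: DFT_def norm_divide)

lemma term1_bound:
  "cmod (mmul h (mmul r X (adj X)) (\<lambda>i l. complex_of_real (Eind h k i l)) i l)
   \<le> (\<Sum>i'=1..h. Eind h k i' l * ((rho r X i + rho r X i')/2))"
proof -
  have "cmod (mmul h (mmul r X (adj X)) (\<lambda>i l. complex_of_real (Eind h k i l)) i l)
     \<le> (\<Sum>i'=1..h. cmod (mmul r X (adj X) i i' * complex_of_real (Eind h k i' l)))"
    unfolding mmul_def[of h] by (rule norm_sum)
  also have "\<dots> \<le> (\<Sum>i'=1..h. Eind h k i' l * ((rho r X i + rho r X i')/2))"
  proof (intro sum_mono)
    fix i' have E0: "Eind h k i' l \<ge> 0" by (simp add: Eind_def)
    show "cmod (mmul r X (adj X) i i' * complex_of_real (Eind h k i' l))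
        \<le> Eind h k i' l * ((rho r X i + rho r X i')/2)"
      using mult_left_mono[OF entry_bound E0] E0 by (simp add: norm_mult mult.commute)
  qed
  finally show ?thesis .
qed

lemma term2_bound:
  "cmod (mmul h (\<lambda>i l. complex_of_real (Eind h k i l)) (mmul r Y (adj Y)) i l)
   \<le> (\<Sum>l'=1..h. Eind h k i l' * ((rho r Y l' + rho r Y l)/2))"
proof -
  have "cmod (mmul h (\<lambda>i l. complex_of_real (Eind h k i l)) (mmul r Y (adj Y)) i l)
     \<le> (\<Sum>l'=1..h. cmod (complex_of_real (Eind h k i l') * mmul r Y (adj Y) l' l))"
    unfolding mmul_def[of h] by (rule norm_sum)
  also have "\<dots> \<le> (\<Sum>l'=1..h. Eind h k i l' * ((rho r Y l' + rho r Y l)/2))"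
  proof (intro sum_mono)
    fix l' have E0: "Eind h k i l' \<ge> 0" by (simp add: Eind_def)
    show "cmod (complex_of_real (Eind h k i l') * mmul r Y (adj Y) l' l)
        \<le> Eind h k i l' * ((rho r Y l' + rho r Y l)/2)"
      using mult_left_mono[OF entry_bound E0] E0 by (simp add: norm_mult)
  qed
  finally show ?thesis .
qed

lemma term3_bound:
  assumes oX: "\<forall>s \<in> {1..r}. \<forall>t \<in> {1..r}.
        (\<Sum>i = 1..h. cnj (X i s) * X i t) = (if s = t then 1 else 0)"
    and oY: "\<forall>s \<in> {1..r}. \<forall>t \<in> {1..r}.
        (\<Sum>i = 1..h. cnj (Y i s) * Y i t) = (if s = t then 1 else 0)"
  shows "cmod (mmul h (mmul h (mmul r X (adj X)) (\<lambda>i l. complex_of_real (Eind h k i l))) (mmul r Y (adj Y)) i l)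
   \<le> (rho r X i + rho r Y l)/2"
proof -
  let ?P = "mmul r X (adj X)" and ?Q = "mmul r Y (adj Y)"
  let ?E = "Eind h k"
  have "cmod (mmul h (mmul h ?P (\<lambda>i l. complex_of_real (?E i l))) ?Q i l)
     \<le> (\<Sum>l'=1..h. cmod (mmul h ?P (\<lambda>i l. complex_of_real (?E i l)) i l' * ?Q l' l))"
    unfolding mmul_def[of h "mmul h _ _"] by (rule norm_sum)
  also have "\<dots> \<le> (\<Sum>l'=1..h. \<Sum>i'=1..h. ?E i' l' * (cmod (?P i i') * cmod (?Q l' l)))"
  proof (intro sum_mono)
    fix l'
    have "cmod (mmul h ?P (\<lambda>i l. complex_of_real (?E i l)) i l')
       \<le> (\<Sum>i'=1..h. cmod (?P i i' * complex_of_real (?E i' l')))"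
      unfolding mmul_def[of h] by (rule norm_sum)
    also have "\<dots> = (\<Sum>i'=1..h. ?E i' l' * cmod (?P i i'))"
      by (intro sum.cong refl) (simp add: norm_mult Eind_def)
    finally have "cmod (mmul h ?P (\<lambda>i l. complex_of_real (?E i l)) i l' * ?Q l' l)
       \<le> (\<Sum>i'=1..h. ?E i' l' * cmod (?P i i')) * cmod (?Q l' l)"
      by (simp add: norm_mult mult_right_mono)
    thus "cmod (mmul h ?P (\<lambda>i l. complex_of_real (?E i l)) i l' * ?Q l' l)
       \<le> (\<Sum>i'=1..h. ?E i' l' * (cmod (?P i i') * cmod (?Q l' l)))"
    proof -
      have "(\<Sum>i'=1..h. ?E i' l' * cmod (?P i i')) * cmod (?Q l' l)
          = (\<Sum>i'=1..h. ?E i' l' * (cmod (?P i i') * cmod (?Q l' l)))"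
        by (simp add: sum_distrib_right mult.assoc)
      with \<open>cmod (mmul h ?P (\<lambda>i l. complex_of_real (?E i l)) i l' * ?Q l' l)
       \<le> (\<Sum>i'=1..h. ?E i' l' * cmod (?P i i')) * cmod (?Q l' l)\<close> show ?thesis by simp
    qed
  qed
  also have "\<dots> \<le> (\<Sum>l'=1..h. \<Sum>i'=1..h. ?E i' l' * (((cmod (?P i i'))^2 + (cmod (?Q l' l))^2)/2))"
    by (intro sum_mono mult_left_mono amgm) (simp add: Eind_def)
  also have "\<dots> = ((\<Sum>i'=1..h. (cmod (?P i i'))^2 * (\<Sum>l'=1..h. ?E i' l'))
                 + (\<Sum>l'=1..h. (cmod (?Q l' l))^2 * (\<Sum>i'=1..h. ?E i' l')))/2"
  proof -
    have "(\<Sum>l'=1..h. \<Sum>i'=1..h. ?E i' l' * (((cmod (?P i i'))^2 + (cmod (?Q l' l))^2)/2))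
       = ((\<Sum>l'=1..h. \<Sum>i'=1..h. ?E i' l' * (cmod (?P i i'))^2)
          + (\<Sum>l'=1..h. \<Sum>i'=1..h. ?E i' l' * (cmod (?Q l' l))^2))/2"
      by (simp add: sum.distrib sum_divide_distrib algebra_simps add_divide_distrib)
    also have "(\<Sum>l'=1..h. \<Sum>i'=1..h. ?E i' l' * (cmod (?P i i'))^2)
       = (\<Sum>i'=1..h. (cmod (?P i i'))^2 * (\<Sum>l'=1..h. ?E i' l'))"
      by (subst sum.swap) (simp add: sum_distrib_right mult_ac)
    also have "(\<Sum>l'=1..h. \<Sum>i'=1..h. ?E i' l' * (cmod (?Q l' l))^2)
       = (\<Sum>l'=1..h. (cmod (?Q l' l))^2 * (\<Sum>i'=1..h. ?E i' l'))"
      by (simp add: sum_distrib_right mult_ac)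
    finally show ?thesis .
  qed
  also have "\<dots> \<le> ((\<Sum>i'=1..h. (cmod (?P i i'))^2) + (\<Sum>l'=1..h. (cmod (?Q l' l))^2))/2"
    by (intro divide_right_mono add_mono sum_mono mult_left_le ind_sum1 ind_sum2) auto
  also have "\<dots> = (rho r X i + rho r Y l)/2"
    using row_norm[OF oX] col_norm[OF oY] by simp
  finally show ?thesis .
qed


lemma L1: "(\<Sum>a\<in>A. (e::real) * ((x a + y a)/2)) = e * ((sum x A + sum y A)/2)"
  by (simp add: sum_distrib_left[symmetric] sum_divide_distrib[symmetric] sum.distrib)
lemma L2: "(1/(d::real)) * (e * ((X + Y)/2)) = e * (((1/d)*X + (1/d)*Y)/2)"
  by (cases "d = 0") (auto simp: field_simps)
lemma L3: "(1/(d::real)) * (\<Sum>i\<in>I. f i) = (\<Sum>i\<in>I. (1/d) * f i)"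
  by (simp add: sum_distrib_left)
lemma L4: "(\<Sum>a\<in>A. ((x a + y a)/2)) = ((sum x A + sum y A)/2::real)"
  by (simp add: sum_divide_distrib[symmetric] sum.distrib)
lemma L5: "(1/(d::real)) * ((X + Y)/2) = (((1/d)*X + (1/d)*Y)/2)"
  by (cases "d = 0") (auto simp: field_simps)

definition T1b :: "nat \<Rightarrow> nat \<Rightarrow> nat \<Rightarrow> cmat \<Rightarrow> nat \<Rightarrow> nat \<Rightarrow> real" where
  "T1b h k r X i l = (\<Sum>i'=1..h. Eind h k i' l * ((rho r X i + rho r X i')/2))"
definition T2b :: "nat \<Rightarrow> nat \<Rightarrow> nat \<Rightarrow> cmat \<Rightarrow> nat \<Rightarrow> nat \<Rightarrow> real" where
  "T2b h k r Y i l = (\<Sum>l'=1..h. Eind h k i l' * ((rho r Y l' + rho r Y l)/2))"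

lemma block_bound:
  assumes oX: "\<forall>s \<in> {1..r}. \<forall>t \<in> {1..r}.
        (\<Sum>i = 1..h. cnj (U a i s) * U a i t) = (if s = t then 1 else 0)"
    and oY: "\<forall>s \<in> {1..r}. \<forall>t \<in> {1..r}.
        (\<Sum>i = 1..h. cnj (V a i s) * V a i t) = (if s = t then 1 else 0)"
  shows "cmod (PT h h r U V (\<lambda>a i l. complex_of_real (Eind h k i l)) a i l)
    \<le> T1b h k r (U a) i l + T2b h k r (V a) i l + (rho r (U a) i + rho r (V a) l)/2"
proof -
  let ?Ec = "\<lambda>i l. complex_of_real (Eind h k i l)"
  let ?P = "mmul r (U a) (adj (U a))" and ?Q = "mmul r (V a) (adj (V a))"
  have "PT h h r U V (\<lambda>a. ?Ec) a i l = mmul h ?P ?Ec i l + mmul h ?Ec ?Q i l - mmul h (mmul h ?P ?Ec) ?Q i l"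
    by (simp add: PT_def Let_def)
  hence "cmod (PT h h r U V (\<lambda>a. ?Ec) a i l) \<le> cmod (mmul h ?P ?Ec i l) + cmod (mmul h ?Ec ?Q i l) + cmod (mmul h (mmul h ?P ?Ec) ?Q i l)"
    by (rule ssubst) (rule order_trans[OF norm_triangle_ineq4 add_right_mono[OF norm_triangle_ineq]])
  also have "\<dots> \<le> T1b h k r (U a) i l + T2b h k r (V a) i l + (rho r (U a) i + rho r (V a) l)/2"
    unfolding T1b_def T2b_def
    by (intro add_mono term1_bound term2_bound term3_bound oX oY)
  finally show ?thesis .
qed

lemma avg_bound:
  assumes d1: "d \<ge> 1"
    and iU: "\<forall>x\<in>{1..h}. (1/real d)*(\<Sum>a=1..d. rho r (U a) x) \<le> c"
    and iV: "\<forall>x\<in>{1..h}. (1/real d)*(\<Sum>a=1..d. rho r (V a) x) \<le> c"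
    and c0: "c \<ge> 0" and i: "i \<in> {1..h}" and l: "l \<in> {1..h}"
  shows "(1/real d) * (\<Sum>a=1..d. T1b h k r (U a) i l + T2b h k r (V a) i l + (rho r (U a) i + rho r (V a) l)/2) \<le> 3 * c"
proof -
  define uU where "uU x = (1/real d)*(\<Sum>a=1..d. rho r (U a) x)" for x
  define uV where "uV x = (1/real d)*(\<Sum>a=1..d. rho r (V a) x)" for x
  have s1: "(1/real d) * (\<Sum>a=1..d. T1b h k r (U a) i l) = (\<Sum>i'=1..h. Eind h k i' l * ((uU i + uU i')/2))"
  proof -
    have "(\<Sum>a=1..d. T1b h k r (U a) i l) = (\<Sum>i'=1..h. \<Sum>a=1..d. Eind h k i' l * ((rho r (U a) i + rho r (U a) i')/2))"
      unfolding T1b_def by (rule sum.swap)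
    thus ?thesis
      apply (simp only:)
      apply (subst L3)
      apply (rule sum.cong[OF refl])
      apply (subst L1)
      apply (subst L2)
      apply (simp add: uU_def uV_def)
      done
  qed
  have s2: "(1/real d) * (\<Sum>a=1..d. T2b h k r (V a) i l) = (\<Sum>l'=1..h. Eind h k i l' * ((uV l' + uV l)/2))"
  proof -
    have "(\<Sum>a=1..d. T2b h k r (V a) i l) = (\<Sum>l'=1..h. \<Sum>a=1..d. Eind h k i l' * ((rho r (V a) l' + rho r (V a) l)/2))"
      unfolding T2b_def by (rule sum.swap)
    thus ?thesis
      apply (simp only:)
      apply (subst L3)
      apply (rule sum.cong[OF refl])
      apply (subst L1)
      apply (subst L2)
      apply (simp add: uU_def uV_def)
      done
  qed
  have s3: "(1/real d) * (\<Sum>a=1..d. (rho r (U a) i + rho r (V a) l)/2) = (uU i + uV l)/2"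
    apply (subst L4) apply (subst L5) apply (simp add: uU_def uV_def)
    done
  have b1: "(\<Sum>i'=1..h. Eind h k i' l * ((uU i + uU i')/2)) \<le> c"
  proof -
    have "(\<Sum>i'=1..h. Eind h k i' l * ((uU i + uU i')/2)) \<le> (\<Sum>i'=1..h. Eind h k i' l * c)"
    proof (intro sum_mono mult_left_mono)
      fix x assume x: "x \<in> {1..h}"
      have "uU i \<le> c" "uU x \<le> c" using iU i x by (auto simp: uU_def)
      thus "(uU i + uU x)/2 \<le> (c::real)"
        by simp
    qed (simp add: Eind_def)
    also have "\<dots> = (\<Sum>i'=1..h. Eind h k i' l) * c" by (simp add: sum_distrib_right)
    also have "\<dots> \<le> 1 * c" by (intro mult_right_mono ind_sum1 c0)
    finally show ?thesis by simp
  qed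
  have b2: "(\<Sum>l'=1..h. Eind h k i l' * ((uV l' + uV l)/2)) \<le> c"
  proof -
    have "(\<Sum>l'=1..h. Eind h k i l' * ((uV l' + uV l)/2)) \<le> (\<Sum>l'=1..h. Eind h k i l' * c)"
    proof (intro sum_mono mult_left_mono)
      fix x assume x: "x \<in> {1..h}"
      have "uV l \<le> c" "uV x \<le> c" using iV l x by (auto simp: uV_def)
      thus "(uV x + uV l)/2 \<le> (c::real)"
        by simp
    qed (simp add: Eind_def)
    also have "\<dots> = (\<Sum>l'=1..h. Eind h k i l') * c" by (simp add: sum_distrib_right)
    also have "\<dots> \<le> 1 * c" by (intro mult_right_mono ind_sum2 c0)
    finally show ?thesis by simp
  qed
  have b3: "(uU i + uV l)/2 \<le> c"
  proof -
    have "uU i \<le> c" "uV l \<le> c" using iU iV i l by (auto simp: uU_def uV_def)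
    thus ?thesis by simp
  qed
  have "(1/real d) * (\<Sum>a=1..d. T1b h k r (U a) i l + T2b h k r (V a) i l + (rho r (U a) i + rho r (V a) l)/2)
     = (1/real d) * (\<Sum>a=1..d. T1b h k r (U a) i l) + (1/real d) * (\<Sum>a=1..d. T2b h k r (V a) i l)
       + (1/real d) * (\<Sum>a=1..d. (rho r (U a) i + rho r (V a) l)/2)"
    by (simp add: sum.distrib distrib_left)
  also have "\<dots> \<le> 3 * c" unfolding s1 s2 s3 using b1 b2 b3 by linarith
  finally show ?thesis .
qed

theorem lemma6p3:
  fixes d n r :: nat and mu0 :: real
    and Z U V :: bdmat and \<sigma> :: "nat \<Rightarrow> nat \<Rightarrow> real"
    and j k \<alpha> \<beta> :: nat
  assumes "d \<ge> 1" and "odd n"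
    and U_orth: "\<forall>a \<in> {1..d}. \<forall>s \<in> {1..r}. \<forall>t \<in> {1..r}.
        (\<Sum>i = 1..half n. cnj (U a i s) * U a i t) = (if s = t then 1 else 0)"
    and V_orth: "\<forall>a \<in> {1..d}. \<forall>s \<in> {1..r}. \<forall>t \<in> {1..r}.
        (\<Sum>i = 1..half n. cnj (V a i s) * V a i t) = (if s = t then 1 else 0)"
    and sv_pos: "\<forall>a \<in> {1..d}. \<forall>t \<in> {1..r}. \<sigma> a t > 0"
    and svd: "\<forall>a \<in> {1..d}. \<forall>i \<in> {1..half n}. \<forall>l \<in> {1..half n}.
        Z a i l = (\<Sum>t = 1..r. U a i t * complex_of_real (\<sigma> a t) * cnj (V a l t))"
    and incoh_U: "\<forall>i \<in> {1..half n}.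
        (1 / real d) * (\<Sum>a = 1..d. \<Sum>t = 1..r. (cmod (U a i t))\<^sup>2) \<le> mu0 * real r / real n"
    and incoh_V: "\<forall>i \<in> {1..half n}.
        (1 / real d) * (\<Sum>a = 1..d. \<Sum>t = 1..r. (cmod (V a i t))\<^sup>2) \<le> mu0 * real r / real n"
    and "j \<in> {1..d}" and "k \<in> {1..n}" and "\<alpha> \<in> {1..d}" and "\<beta> \<in> {1..n}"
  shows "sqrt (real (wt n k) / real (wt n \<beta>))
         * cmod (inner_bd d (half n) (half n)
                   (PT (half n) (half n) r U V (Ghat d n j k)) (Ghat d n \<alpha> \<beta>))
         \<le> 3 * mu0 * real r / real n"
proof -
  define h where "h = half n"
  have n1: "n \<ge> 1" using \<open>odd n\<close> by (cases n) auto
  have h1: "h \<ge> 1" unfolding h_def half_def using n1 by simp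
  define c where "c = mu0 * real r / real n"
  have iU': "\<forall>x\<in>{1..h}. (1/real d)*(\<Sum>a=1..d. rho r (U a) x) \<le> c"
    using incoh_U by (simp add: rho_def h_def c_def)
  have iV': "\<forall>x\<in>{1..h}. (1/real d)*(\<Sum>a=1..d. rho r (V a) x) \<le> c"
    using incoh_V by (simp add: rho_def h_def c_def)
  have c0: "c \<ge> 0"
  proof -
    have "0 \<le> (1/real d)*(\<Sum>a=1..d. rho r (U a) 1)"
      by (intro mult_nonneg_nonneg sum_nonneg rho_nonneg) auto
    also have "\<dots> \<le> c" using iU' h1 by auto
    finally show ?thesis .
  qed
  have wpos: "wt n b > 0" if b: "b \<in> {1..n}" for b
  proof -
    let ?S = "{(j, k). j \<in> {1..half n} \<and> k \<in> {1..half n} \<and> j + k = b + 1}"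
    have fin: "finite ?S"
      by (rule finite_subset[of _ "{1..half n} \<times> {1..half n}"]) auto
    have hn: "2 * half n = n + 1" unfolding half_def using \<open>odd n\<close> by presburger
    have "?S \<noteq> {}"
    proof (cases "b \<le> half n")
      case True
      hence "(1, b) \<in> ?S" using b by auto
      thus ?thesis by blast
    next
      case False
      hence "(b + 1 - half n, half n) \<in> ?S" using b hn by auto
      thus ?thesis by blast
    qed
    thus ?thesis unfolding wt_def using fin by (simp add: card_gt_0_iff)
  qed
  define Ec where "Ec b = (\<lambda>i l. complex_of_real (Eind h b i l))" for b
  define g where "g b = 1 / sqrt (real (wt n b))" for b
  have g0: "g b \<ge> 0" for b by (simp add: g_def)
  have Ghat_eq: "Ghat d n j' b = (\<lambda>a i l. (DFT d a j' * complex_of_real (g b)) * Ec b i l)" for j' b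
    by (simp add: Ghat_def Gmat_def Eind_def Ec_def g_def h_def fun_eq_iff)
  define T where "T = PT h h r U V (\<lambda>a. Ec k)"
  have PTeq: "PT h h r U V (Ghat d n j k) = (\<lambda>a i l. (DFT d a j * complex_of_real (g k)) * T a i l)"
    unfolding Ghat_eq T_def by (rule PT_scale)
  define S where "S a = (\<Sum>i=1..h. \<Sum>l=1..h. T a i l * Ec \<beta> i l)" for a
  define coef where "coef a = DFT d a j * complex_of_real (g k) * cnj (DFT d a \<alpha>) * complex_of_real (g \<beta>)" for a
  have inner_eq: "inner_bd d h h (PT h h r U V (Ghat d n j k)) (Ghat d n \<alpha> \<beta>) = (\<Sum>a=1..d. coef a * S a)"
    apply (subst PTeq)
    unfolding inner_bd_def S_def Ghat_eq coef_def
    by (simp add: sum_distrib_left mult_ac Ec_def)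
  have coef_norm: "cmod (coef a) = g k * g \<beta> / real d" for a
    using g0[of k] g0[of \<beta>] \<open>d \<ge> 1\<close>
    by (simp add: coef_def norm_mult norm_DFT)
  have normS: "cmod (S a) \<le> (\<Sum>i=1..h. \<Sum>l=1..h. Eind h \<beta> i l * cmod (T a i l))" for a
  proof -
    have "cmod (S a) \<le> (\<Sum>i=1..h. cmod (\<Sum>l=1..h. T a i l * Ec \<beta> i l))"
      unfolding S_def by (rule norm_sum)
    also have "\<dots> \<le> (\<Sum>i=1..h. \<Sum>l=1..h. cmod (T a i l * Ec \<beta> i l))"
      by (intro sum_mono norm_sum)
    also have "\<dots> = (\<Sum>i=1..h. \<Sum>l=1..h. Eind h \<beta> i l * cmod (T a i l))"
      by (intro sum.cong refl) (simp add: Ec_def norm_mult Eind_def)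
    finally show ?thesis .
  qed
  define Bd where "Bd a i l = T1b h k r (U a) i l + T2b h k r (V a) i l + (rho r (U a) i + rho r (V a) l)/2" for a i l
  have Tb: "cmod (T a i l) \<le> Bd a i l" if a: "a \<in> {1..d}" for a i l
    unfolding T_def Bd_def Ec_def
    by (rule block_bound) (use U_orth V_orth a in \<open>simp_all add: h_def\<close>)
  have avg: "(1/real d) * (\<Sum>a=1..d. Bd a i l) \<le> 3 * c" if "i \<in> {1..h}" "l \<in> {1..h}" for i l
    unfolding Bd_def by (rule avg_bound) (use \<open>d \<ge> 1\<close> iU' iV' c0 that in auto)
  have main: "(1/real d) * (\<Sum>a=1..d. cmod (S a)) \<le> 3 * c * real (wt n \<beta>)"
  proof -
    have "(1/real d) * (\<Sum>a=1..d. cmod (S a)) \<le> (1/real d) * (\<Sum>a=1..d. \<Sum>i=1..h. \<Sum>l=1..h. Eind h \<beta> i l * Bd a i l)"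
    proof (rule mult_left_mono[OF sum_mono])
      fix a assume a: "a \<in> {1..d}"
      have "(\<Sum>i=1..h. \<Sum>l=1..h. Eind h \<beta> i l * cmod (T a i l)) \<le> (\<Sum>i=1..h. \<Sum>l=1..h. Eind h \<beta> i l * Bd a i l)"
        by (intro sum_mono mult_left_mono Tb a) (simp add: Eind_def)
      with normS[of a] show "cmod (S a) \<le> (\<Sum>i=1..h. \<Sum>l=1..h. Eind h \<beta> i l * Bd a i l)" by linarith
    qed simp
    also have "\<dots> = (\<Sum>i=1..h. \<Sum>l=1..h. Eind h \<beta> i l * ((1/real d) * (\<Sum>a=1..d. Bd a i l)))"
    proof -
      have "(\<Sum>a=1..d. \<Sum>i=1..h. \<Sum>l=1..h. Eind h \<beta> i l * Bd a i l)
          = (\<Sum>i=1..h. \<Sum>a=1..d. \<Sum>l=1..h. Eind h \<beta> i l * Bd a i l)" by (rule sum.swap)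
      also have "\<dots> = (\<Sum>i=1..h. \<Sum>l=1..h. \<Sum>a=1..d. Eind h \<beta> i l * Bd a i l)"
        by (rule sum.cong[OF refl], rule sum.swap)
      finally show ?thesis by (simp add: sum_distrib_left mult_ac)
    qed
    also have "\<dots> \<le> (\<Sum>i=1..h. \<Sum>l=1..h. Eind h \<beta> i l * (3 * c))"
      by (intro sum_mono mult_left_mono avg) (auto simp: Eind_def)
    also have "\<dots> = 3 * c * (\<Sum>i=1..h. \<Sum>l=1..h. Eind h \<beta> i l)"
      by (simp add: sum_distrib_left sum_distrib_right mult_ac)
    also have "\<dots> = 3 * c * real (wt n \<beta>)"
      using ind_count[of n \<beta>] by (simp add: h_def)
    finally show ?thesis .
  qed
  have wk: "real (wt n k) > 0" and wb: "real (wt n \<beta>) > 0"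
    using wpos \<open>k \<in> {1..n}\<close> \<open>\<beta> \<in> {1..n}\<close> by auto
  have "cmod (inner_bd d h h (PT h h r U V (Ghat d n j k)) (Ghat d n \<alpha> \<beta>))
      \<le> (\<Sum>a=1..d. cmod (coef a * S a))"
    unfolding inner_eq by (rule norm_sum)
  also have "\<dots> = (g k * g \<beta>) * ((1/real d) * (\<Sum>a=1..d. cmod (S a)))"
    by (simp add: norm_mult coef_norm sum_distrib_left mult_ac)
  finally have I: "cmod (inner_bd d h h (PT h h r U V (Ghat d n j k)) (Ghat d n \<alpha> \<beta>))
      \<le> (g k * g \<beta>) * ((1/real d) * (\<Sum>a=1..d. cmod (S a)))" .
  have key: "sqrt (real (wt n k) / real (wt n \<beta>)) * (g k * g \<beta>) = 1 / real (wt n \<beta>)"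
    using wk wb by (simp add: g_def real_sqrt_divide field_simps)
  have "sqrt (real (wt n k) / real (wt n \<beta>)) * cmod (inner_bd d h h (PT h h r U V (Ghat d n j k)) (Ghat d n \<alpha> \<beta>))
      \<le> sqrt (real (wt n k) / real (wt n \<beta>)) * ((g k * g \<beta>) * ((1/real d) * (\<Sum>a=1..d. cmod (S a))))"
    by (rule mult_left_mono[OF I]) simp
  also have "\<dots> = (1 / real (wt n \<beta>)) * ((1/real d) * (\<Sum>a=1..d. cmod (S a)))"
    using key by (simp add: mult.assoc[symmetric])
  also have "\<dots> \<le> (1 / real (wt n \<beta>)) * (3 * c * real (wt n \<beta>))"
    by (rule mult_left_mono[OF main]) simp
  also have "\<dots> = 3 * mu0 * real r / real n"
    using wb by (simp add: c_def)
  finally show ?thesis unfolding h_def .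
qed

end
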